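(* Let $q=2^n$, let $B$ be a $k$-subset of $\mathrm{GF}(q)$, and let $E$ be a subset of $\mathrm{GF}(q)$ such that $\hat f_B(\mu)=\hat f_E(\mu^d)$ for all $\mu\in\mathrm{GF}(q)$, where $\gcd(d,q-1)=1$. For pairwise distinct $u_1,u_2,u_3\in\mathrm{GF}(q)$ let $I_B(u_1,u_2,u_3)=|\{(x,y)\in\mathrm{GF}(q)^2: u_ix+y\in B \ (i=1,2,3)\}|$. Then \[I_B(u_1,u_2,u_3)=N_E\big((u_2+u_3)^d,(u_3+u_1)^d,(u_1+u_2)^d\big).\]
   Context: $\mathrm{Tr}$ is the absolute trace $\mathrm{GF}(2^n)\to\mathrm{GF}(2)$. For a subset $S\subseteq\mathrm{GF}(q)$, $f_S$ is its characteristic function as a Boolean function, and $\hat f(\mu)=\sum_{x\in\mathrm{GF}(2^n)}(-1)^{f(x)+\mathrm{Tr}(\mu x)}$ is the Walsh transform. For $S\subseteq\mathrm{GF}(q)$ and $a,b,c\in\mathrm{GF}(q)$, $N_S(a,b,c)$ is the number of triples $(x,y,z)\in S^3$ with $ax+by+cz=0$. *)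

theory Defs
  imports Main
begin

text \<open>GF(2^n) is modelled as an arbitrary finite field type 'a with CARD('a) = 2^n.\<close>

definition abs_trace :: "nat \<Rightarrow> 'a::field \<Rightarrow> 'a" where
  "abs_trace n x = (\<Sum>i<n. x ^ (2 ^ i))"

definition char_fun :: "'a set \<Rightarrow> 'a \<Rightarrow> int" where
  "char_fun S x = (if x \<in> S then 1 else 0)"

text \<open>The trace takes values in GF(2) = {0,1}; bit gives the corresponding integer.\<close>
definition bit01 :: "'a::field \<Rightarrow> int" where
  "bit01 y = (if y = 0 then 0 else 1)"

definition walsh :: "nat \<Rightarrow> ('a::{finite,field} \<Rightarrow> int) \<Rightarrow> 'a \<Rightarrow> int" where
  "walsh n f \<mu> = (\<Sum>x\<in>UNIV. (-1) ^ nat (f x + bit01 (abs_trace n (\<mu> * x))))"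

definition N_count :: "'a::{finite,field} set \<Rightarrow> 'a \<Rightarrow> 'a \<Rightarrow> 'a \<Rightarrow> nat" where
  "N_count S a b c = card {(x, y, z). x \<in> S \<and> y \<in> S \<and> z \<in> S \<and> a * x + b * y + c * z = 0}"

definition I_count :: "'a::{finite,field} set \<Rightarrow> 'a \<Rightarrow> 'a \<Rightarrow> 'a \<Rightarrow> nat" where
  "I_count B u1 u2 u3 = card {(x, y). u1 * x + y \<in> B \<and> u2 * x + y \<in> B \<and> u3 * x + y \<in> B}"

end

theory Submission imports Defs "HOL-Computational_Algebra.Polynomial" "HOL-Library.Cardinality" begin

lemma ff_pow_card_minus1:
  fixes x :: "'a::{finite,field}"
  assumes "x \<noteq> 0"
  shows "x ^ (CARD('a) - 1) = 1"
proof -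
  have "(\<Prod>y\<in>UNIV-{0}. x * y) = x ^ card (UNIV - {0::'a}) * (\<Prod>y\<in>UNIV-{0}. y)"
    by (simp add: prod.distrib)
  also have "card (UNIV - {0::'a}) = CARD('a) - 1" by (simp add: card_Diff_singleton)
  also have "(\<Prod>y\<in>UNIV-{0}. x * y) = (\<Prod>y\<in>UNIV-{0}. y)"
    by (rule prod.reindex_bij_witness[of _ "\<lambda>y. y / x" "\<lambda>y. x * y"]) (use assms in auto)
  finally have "(\<Prod>y\<in>UNIV-{0::'a}. y) * 1 = (\<Prod>y\<in>UNIV-{0::'a}. y) * x ^ (CARD('a) - 1)" by simp
  moreover have "(\<Prod>y\<in>UNIV-{0::'a}. y) \<noteq> 0" by simp
  ultimately show ?thesis by (metis mult_left_cancel)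
qed

lemma ff_pow_card:
  fixes x :: "'a::{finite,field}"
  shows "x ^ CARD('a) = x"
proof (cases "x = 0")
  case True
  then show ?thesis by simp
next
  case False
  have "CARD('a) = Suc (CARD('a) - 1)" using finite_UNIV_card_ge_0[where ?'a='a] by simp
  then have "x ^ CARD('a) = x * x ^ (CARD('a) - 1)" by (metis power_Suc)
  then show ?thesis using ff_pow_card_minus1[OF False] by simp
qed

locale char2 =
  fixes n :: nat and dummy :: "'a::{finite,field} itself"
  assumes card2: "CARD('a) = 2 ^ n"
begin

lemma n_pos: "n \<ge> 1"
proof (rule ccontr)
  assume "\<not> n \<ge> 1" then have "CARD('a) = 1" using card2 by simp
  then obtain z :: 'a where "UNIV = {z}" using card_1_singletonE by blast
  then have "(0::'a) = 1" by (metis UNIV_I singletonD)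
  then show False by simp
qed

lemma neg_one: "-(1::'a) = 1"
proof -
  have "even (CARD('a))" using card2 n_pos by (cases n) auto
  then have "(-1::'a) ^ CARD('a) = 1" by simp
  then show ?thesis using ff_pow_card[of "-1::'a"] by simp
qed

lemma neg_eq: "-(x::'a) = x"
  using neg_one by (metis mult_minus1 mult.commute mult_1 minus_mult_left)

lemma add_self: "(x::'a) + x = 0"
  by (metis neg_eq add.right_inverse)

lemma minus_eq_plus: "(x::'a) - y = x + y"
  by (metis neg_eq diff_conv_add_uminus)


lemma frob2: "((x::'a) + y) ^ 2 = x ^ 2 + y ^ 2"
proof -
  have "(x + y) ^ 2 = x ^ 2 + y ^ 2 + (x * y + x * y)" by (simp add: power2_eq_square algebra_simps)
  then show ?thesis by (simp add: add_self)
qed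

lemma frob: "((x::'a) + y) ^ (2 ^ i) = x ^ (2 ^ i) + y ^ (2 ^ i)"
proof (induction i)
  case 0 then show ?case by simp
next
  case (Suc i)
  have "(x + y) ^ (2 ^ Suc i) = ((x + y) ^ (2 ^ i)) ^ 2" by (simp add: power_mult[symmetric] mult.commute)
  also have "\<dots> = (x ^ (2 ^ i)) ^ 2 + (y ^ (2 ^ i)) ^ 2" using Suc frob2 by simp
  also have "\<dots> = x ^ (2 ^ Suc i) + y ^ (2 ^ Suc i)" by (simp add: power_mult[symmetric] mult.commute)
  finally show ?case .
qed

lemma sq_sum: "(\<Sum>i\<in>A. (f i::'a)) ^ 2 = (\<Sum>i\<in>A. f i ^ 2)"
proof (induction A rule: infinite_finite_induct)
  case (insert a A) then show ?case by (simp add: frob2)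
qed auto

definition tr :: "'a \<Rightarrow> 'a" where "tr x = abs_trace n x"

lemma tr_add: "tr (x + y) = tr x + tr y"
  unfolding tr_def abs_trace_def by (simp add: frob sum.distrib)

lemma tr_zero: "tr 0 = 0"
  unfolding tr_def abs_trace_def by (simp add: power_0_left)

lemma tr_sq: "tr x ^ 2 = tr x"
proof -
  have "tr x ^ 2 = (\<Sum>i<n. x ^ (2 ^ Suc i))"
    unfolding tr_def abs_trace_def sq_sum by (simp add: power_mult[symmetric] mult.commute)
  moreover have "(\<Sum>i<Suc n. x ^ (2 ^ i)) = x + (\<Sum>i<n. x ^ (2 ^ Suc i))"
    by (simp only: sum.lessThan_Suc_shift power_0 power_one_right)
  ultimately have "tr x ^ 2 + x = (\<Sum>i<Suc n. x ^ (2 ^ i))" by (simp add: add.commute)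
  also have "\<dots> = tr x + x ^ (2 ^ n)" by (simp add: tr_def abs_trace_def)
  also have "x ^ (2 ^ n) = x" using ff_pow_card[of x] card2 by simp
  finally show ?thesis by simp
qed

lemma tr_01: "tr x = 0 \<or> tr x = 1"
proof -
  have "tr x * (tr x - 1) = 0" using tr_sq[of x] by (simp add: power2_eq_square algebra_simps)
  then show ?thesis by simp
qed

lemma tr_nontriv: "\<exists>a. tr a \<noteq> 0"
proof (rule ccontr)
  assume "\<not> (\<exists>a. tr a \<noteq> 0)"
  then have all0: "\<forall>a. tr a = 0" by simp
  define p :: "'a poly" where "p = (\<Sum>i<n. monom 1 (2 ^ i))"
  have pe: "poly p x = tr x" for x
    unfolding p_def tr_def abs_trace_def by (simp add: poly_sum poly_monom)
  have "coeff p (2 ^ (n - 1)) = (\<Sum>i<n. if 2 ^ (n - 1) = (2::nat) ^ i then 1 else 0)"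
    unfolding p_def coeff_sum by (simp add: coeff_monom)
  also have "\<dots> = (\<Sum>i\<in>{n-1}. 1)"
    by (rule sum.mono_neutral_cong_right) (use n_pos in auto)
  finally have "coeff p (2 ^ (n - 1)) = 1" by simp
  then have pnz: "p \<noteq> 0" by auto
  have "degree p \<le> 2 ^ (n - 1)"
    unfolding p_def
  proof (rule degree_sum_le)
    fix i assume "i \<in> {..<n}"
    then have "(2::nat) ^ i \<le> 2 ^ (n - 1)" by (intro power_increasing) auto
    then show "degree (monom (1::'a) (2 ^ i)) \<le> 2 ^ (n - 1)" using degree_monom_le order_trans by blast
  qed auto
  moreover have "card {x. poly p x = 0} \<le> degree p" by (rule card_poly_roots_bound[OF pnz])
  moreover have "{x. poly p x = 0} = UNIV" using pe all0 by auto
  moreover have "card {x. poly p x = 0} = 2 ^ n" using card2 \<open>{x. poly p x = 0} = UNIV\<close> by simp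
  moreover have "(2::nat) ^ (n - 1) < 2 ^ n" using n_pos by (intro power_strict_increasing) auto
  ultimately show False by linarith
qed

definition e :: "'a \<Rightarrow> int" where "e x = (if tr x = 0 then 1 else -1)"

lemma e_add: "e (x + y) = e x * e y"
proof -
  have o: "(2::'a) = 0" using add_self[of 1] by simp
  show ?thesis using tr_01[of x] tr_01[of y] unfolding e_def tr_add by (auto simp: o)
qed

lemma e_zero: "e 0 = 1" by (simp add: e_def tr_zero)

lemma e_sq: "e x * e x = 1" by (simp add: e_def)

lemma sum_e: "(\<Sum>x\<in>UNIV. e x) = 0"
proof -
  obtain a where a: "tr a \<noteq> 0" using tr_nontriv by blast
  have ea: "e a = -1" using a by (simp add: e_def)
  have "(\<Sum>x\<in>UNIV. e x) = (\<Sum>x\<in>UNIV. e (x + a))"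
    by (rule sum.reindex_bij_witness[of _ "\<lambda>x. x + a" "\<lambda>x. x - a"]) auto
  also have "\<dots> = - (\<Sum>x\<in>UNIV. e x)" by (simp add: e_add ea sum_negf)
  finally show ?thesis by simp
qed

lemma orth: "(\<Sum>x\<in>UNIV. e (\<mu> * x)) = (if \<mu> = 0 then int CARD('a) else 0)"
proof (cases "\<mu> = 0")
  case True then show ?thesis by (simp add: e_zero)
next
  case False
  have "(\<Sum>x\<in>UNIV. e (\<mu> * x)) = (\<Sum>x\<in>UNIV. e x)"
    by (rule sum.reindex_bij_witness[of _ "\<lambda>x. x / \<mu>" "\<lambda>x. \<mu> * x"]) (use False in auto)
  then show ?thesis using sum_e False by simp
qed


definition chi :: "'a set \<Rightarrow> 'a \<Rightarrow> int" where "chi S \<mu> = (\<Sum>x\<in>S. e (\<mu> * x))"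

lemma walsh_formula:
  "walsh n (char_fun S) \<mu> = (if \<mu> = 0 then int CARD('a) else 0) - 2 * chi S \<mu>"
proof -
  have t: "(-1::int) ^ nat (char_fun S x + bit01 (abs_trace n (\<mu> * x)))
      = e (\<mu> * x) - 2 * (if x \<in> S then e (\<mu> * x) else 0)" for x
    using tr_01[of "\<mu> * x"]
    by (auto simp: char_fun_def bit01_def e_def tr_def[symmetric])
  have "walsh n (char_fun S) \<mu> = (\<Sum>x\<in>UNIV. e (\<mu> * x)) - 2 * (\<Sum>x\<in>UNIV. if x \<in> S then e (\<mu> * x) else 0)"
    unfolding walsh_def t by (simp add: sum_subtractf sum_distrib_left)
  also have "(\<Sum>x\<in>UNIV. if x \<in> S then e (\<mu> * x) else 0) = chi S \<mu>"
    unfolding chi_def using sum.inter_restrict[of "UNIV::'a set" "\<lambda>x. e (\<mu> * x)" S] by simp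
  finally show ?thesis by (simp add: orth)
qed

lemma chi3: "chi S (s * a) * chi S (s * b) * chi S (s * c)
   = (\<Sum>p\<in>S \<times> S \<times> S. e (s * (a * fst p + b * fst (snd p) + c * snd (snd p))))"
proof -
  have "chi S (s * a) * chi S (s * b) * chi S (s * c)
      = (\<Sum>x\<in>S. \<Sum>y\<in>S. \<Sum>z\<in>S. e (s * a * x) * e (s * b * y) * e (s * c * z))"
  proof -
    have "chi S (s * a) * chi S (s * b) * chi S (s * c) = chi S (s * a) * (chi S (s * b) * chi S (s * c))"
      by (simp add: mult.assoc)
    also have "chi S (s * b) * chi S (s * c) = (\<Sum>y\<in>S. \<Sum>z\<in>S. e (s * b * y) * e (s * c * z))"
      unfolding chi_def sum_product by (simp add: mult.assoc)
    also have "chi S (s * a) * \<dots> = (\<Sum>x\<in>S. \<Sum>y\<in>S. e (s * a * x) * (\<Sum>z\<in>S. e (s * b * y) * e (s * c * z)))"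
      unfolding chi_def sum_product by (simp add: mult.assoc)
    finally show ?thesis by (simp add: sum_distrib_left mult.assoc)
  qed
  also have "\<dots> = (\<Sum>x\<in>S. \<Sum>y\<in>S. \<Sum>z\<in>S. e (s * (a * x + b * y + c * z)))"
    by (simp add: e_add[symmetric] algebra_simps)
  also have "\<dots> = (\<Sum>p\<in>S \<times> S \<times> S. e (s * (a * fst p + b * fst (snd p) + c * snd (snd p))))"
    by (simp add: sum.cartesian_product case_prod_beta)
  finally show ?thesis .
qed

lemma N_formula:
  "int CARD('a) * int (N_count S a b c) = (\<Sum>s\<in>UNIV. chi S (s * a) * chi S (s * b) * chi S (s * c))"
proof -
  define T where "T = S \<times> S \<times> S"
  define w where "w p = a * fst p + b * fst (snd p) + c * snd (snd p)" for p
  have "(\<Sum>s\<in>UNIV. chi S (s * a) * chi S (s * b) * chi S (s * c))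
      = (\<Sum>s\<in>UNIV. \<Sum>p\<in>T. e (s * w p))" unfolding chi3 T_def w_def by simp
  also have "\<dots> = (\<Sum>p\<in>T. \<Sum>s\<in>UNIV. e (s * w p))" by (rule sum.swap)
  also have "\<dots> = (\<Sum>p\<in>T. if p \<in> {p. w p = 0} then int CARD('a) else 0)"
  proof (rule sum.cong)
    fix p
    have "(\<Sum>s\<in>UNIV. e (s * w p)) = (\<Sum>s\<in>UNIV. e (w p * s))" by (simp add: mult.commute)
    then show "(\<Sum>s\<in>UNIV. e (s * w p)) = (if p \<in> {p. w p = 0} then int CARD('a) else 0)"
      by (simp add: orth)
  qed simp
  also have "\<dots> = (\<Sum>p\<in>T \<inter> {p. w p = 0}. int CARD('a))"
    using sum.inter_restrict[of T "\<lambda>_. int CARD('a)" "{p. w p = 0}"] by (simp add: T_def)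
  also have "T \<inter> {p. w p = 0} = {(x, y, z). x \<in> S \<and> y \<in> S \<and> z \<in> S \<and> a * x + b * y + c * z = 0}"
    by (auto simp: T_def w_def)
  finally show ?thesis by (simp add: N_count_def)
qed

end

lemma I_eq_N:
  fixes B :: "'a::{finite,field} set" and u1 u2 u3 :: 'a
  assumes "u1 \<noteq> u2"
  shows "I_count B u1 u2 u3 = N_count B (u2 - u3) (u3 - u1) (u1 - u2)"
proof -
  have nz: "u1 - u2 \<noteq> 0" using assms by simp
  define f where "f = (\<lambda>(x::'a, y::'a). (u1 * x + y, u2 * x + y, u3 * x + y))"
  define g where "g = (\<lambda>(b1::'a, b2::'a, b3::'a). ((b1 - b2) / (u1 - u2), b1 - u1 * ((b1 - b2) / (u1 - u2))))"
  define A where "A = {(x, y). u1 * x + y \<in> B \<and> u2 * x + y \<in> B \<and> u3 * x + y \<in> B}"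
  define C where "C = {(x, y, z). x \<in> B \<and> y \<in> B \<and> z \<in> B \<and> (u2 - u3) * x + (u3 - u1) * y + (u1 - u2) * z = 0}"
  have hX: "(u1 - u2) * ((b1 - b2) / (u1 - u2)) = b1 - b2" for b1 b2 using nz by simp
  have two: "u2 * ((b1 - b2) / (u1 - u2)) + (b1 - u1 * ((b1 - b2) / (u1 - u2))) = b2" for b1 b2
  proof -
    have "u2 * Y + (b1 - u1 * Y) = b1 - (u1 - u2) * Y" for Y by (simp add: algebra_simps)
    then have "u2 * ((b1 - b2) / (u1 - u2)) + (b1 - u1 * ((b1 - b2) / (u1 - u2))) = b1 - (u1 - u2) * ((b1 - b2) / (u1 - u2))" .
    also have "\<dots> = b1 - (b1 - b2)" by (simp only: hX)
    finally show ?thesis by simp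
  qed
  have key: "u3 * ((b1 - b2) / (u1 - u2)) + (b1 - u1 * ((b1 - b2) / (u1 - u2))) = b3"
    if r: "(u2 - u3) * b1 + (u3 - u1) * b2 + (u1 - u2) * b3 = 0" for b1 b2 b3
  proof -
    define X where "X = (b1 - b2) / (u1 - u2)"
    have r2: "(u1 - u2) * b3 = 0 - ((u2 - u3) * b1 + (u3 - u1) * b2)"
      using r by (metis diff_0 eq_neg_iff_add_eq_0 add.commute)
    have "(u1 - u2) * (u3 * X + (b1 - u1 * X)) = (u3 - u1) * ((u1 - u2) * X) + (u1 - u2) * b1"
      by (simp add: algebra_simps)
    also have "\<dots> = (u3 - u1) * (b1 - b2) + (u1 - u2) * b1" unfolding X_def hX ..
    also have "\<dots> = (u1 - u2) * b3" unfolding r2 by (simp add: algebra_simps)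
    finally have h: "(u1 - u2) * (u3 * X + (b1 - u1 * X)) = (u1 - u2) * b3" .
    show ?thesis using h nz unfolding X_def by (metis mult_left_cancel)
  qed
  have "bij_betw f A C"
  proof (rule bij_betw_byWitness[where f' = g])
    show "\<forall>a\<in>A. g (f a) = a" using nz by (auto simp: f_def g_def field_simps)
    show "\<forall>a\<in>C. f (g a) = a"
    proof
      fix a assume "a \<in> C"
      then obtain b1 b2 b3 where a: "a = (b1, b2, b3)"
        and r: "(u2 - u3) * b1 + (u3 - u1) * b2 + (u1 - u2) * b3 = 0" by (auto simp: C_def)
      have 2: "u2 * ((b1 - b2) / (u1 - u2)) + (b1 - u1 * ((b1 - b2) / (u1 - u2))) = b2"
        by (rule two)
      show "f (g a) = a" using key[OF r] 2 by (simp add: a f_def g_def)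
    qed
    show "f ` A \<subseteq> C" by (auto simp: f_def A_def C_def algebra_simps)
    show "g ` C \<subseteq> A"
    proof
      fix a assume "a \<in> g ` C"
      then obtain b1 b2 b3 where a: "a = g (b1, b2, b3)" and m: "(b1, b2, b3) \<in> C" by auto
      have r: "(u2 - u3) * b1 + (u3 - u1) * b2 + (u1 - u2) * b3 = 0" using m by (auto simp: C_def)
      have 2: "u2 * ((b1 - b2) / (u1 - u2)) + (b1 - u1 * ((b1 - b2) / (u1 - u2))) = b2"
        by (rule two)
      show "a \<in> A" using key[OF r] 2 m by (simp add: a g_def A_def C_def)
    qed
  qed
  then have "card A = card C" by (rule bij_betw_same_card)
  then show ?thesis by (simp add: I_count_def N_count_def A_def C_def)
qed

lemma pow_bij:
  fixes d :: nat
  assumes "d \<noteq> 0" "gcd d (CARD('a::{finite,field}) - 1) = 1"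
  shows "bij (\<lambda>x::'a. x ^ d)"
proof -
  have "inj (\<lambda>x::'a. x ^ d)"
  proof (rule injI)
    fix a b :: 'a assume ab: "a ^ d = b ^ d"
    show "a = b"
    proof (cases "b = 0")
      case True then show ?thesis using ab assms(1) by (simp add: power_0_left)
    next
      case False
      define r where "r = a / b"
      have rd: "r ^ d = 1" using ab False by (simp add: r_def power_divide)
      have "a \<noteq> 0" using ab False assms(1) by (auto simp: power_0_left)
      then have rnz: "r \<noteq> 0" using False by (simp add: r_def)
      obtain s t where st: "d * s = (CARD('a) - 1) * t + 1" using bezout_nat[OF assms(1), of "CARD('a) - 1"] assms(2) by auto
      have "1 = (r ^ d) ^ s" using rd by simp
      also have "\<dots> = r ^ ((CARD('a) - 1) * t + 1)" by (simp add: power_mult[symmetric] st)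
      also have "\<dots> = r" using ff_pow_card_minus1[OF rnz] by (simp add: power_add power_mult)
      finally have "r = 1" by simp
      then show ?thesis using False by (simp add: r_def)
    qed
  qed
  then show ?thesis using finite_UNIV_inj_surj[of "\<lambda>x::'a. x ^ d"] by (simp add: bij_def)
qed


theorem lemma6:
  fixes B E :: "'a::{finite,field} set" and n k d :: nat and u1 u2 u3 :: 'a
  assumes "card (UNIV :: 'a set) = 2 ^ n"
    and "card B = k"
    and "gcd d (2 ^ n - 1) = 1"
    and "\<forall>\<mu>. walsh n (char_fun B) \<mu> = walsh n (char_fun E) (\<mu> ^ d)"
    and "u1 \<noteq> u2" and "u2 \<noteq> u3" and "u1 \<noteq> u3"
  shows "I_count B u1 u2 u3 = N_count E ((u2 + u3) ^ d) ((u3 + u1) ^ d) ((u1 + u2) ^ d)"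
proof -
  interpret char2 n "TYPE('a)" by unfold_locales (rule assms(1))
  have W: "(if \<mu> = 0 then int CARD('a) else 0) - 2 * chi B \<mu>
        = (if \<mu> ^ d = 0 then int CARD('a) else 0) - 2 * chi E (\<mu> ^ d)" for \<mu>
    using assms(4) by (simp add: walsh_formula)
  show ?thesis
  proof (cases "d = 0")
    case True
    then have q2: "CARD('a) = 2" using assms(3) card2 by simp
    have w0: "int CARD('a) - 2 * chi B 0 = 0 - 2 * chi E 1" using W[of 0] True by simp
    have w1: "0 - 2 * chi B 1 = 0 - 2 * chi E 1" using W[of 1] True by simp
    have c0: "chi B 0 = int (card B)" by (simp add: chi_def e_zero)
    have "chi B 1 + int (card B) = (\<Sum>x\<in>B. e x + 1)" by (simp add: chi_def sum.distrib)
    also have "\<dots> = 2 * (\<Sum>x\<in>B. if tr x = 0 then 1 else 0)"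
      unfolding sum_distrib_left by (rule sum.cong) (auto simp: e_def)
    finally have ev: "chi B 1 + int (card B) = 2 * (\<Sum>x\<in>B. if tr x = 0 then 1 else 0)" .
    have "chi B 1 = int (card B) - 1" using w0 w1 c0 q2 by simp
    with ev show ?thesis by presburger
  next
    case False
    have dz: "\<mu> ^ d = 0 \<longleftrightarrow> \<mu> = 0" for \<mu> :: 'a using False by simp
    have chiBE: "chi B \<mu> = chi E (\<mu> ^ d)" for \<mu> using W[of \<mu>] unfolding dz by (cases "\<mu> = 0") auto
    have bij: "bij (\<lambda>x::'a. x ^ d)" using pow_bij[OF False, where 'a='a] assms(3) card2 by simp
    define a where "a = u2 - u3"
    define b where "b = u3 - u1"
    define c where "c = u1 - u2"
    have "int CARD('a) * int (N_count B a b c) = (\<Sum>s\<in>UNIV. chi B (s * a) * chi B (s * b) * chi B (s * c))"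
      by (rule N_formula)
    also have "\<dots> = (\<Sum>s\<in>UNIV. chi E (s ^ d * a ^ d) * chi E (s ^ d * b ^ d) * chi E (s ^ d * c ^ d))"
      by (simp add: chiBE power_mult_distrib)
    also have "\<dots> = (\<Sum>t\<in>UNIV. chi E (t * a ^ d) * chi E (t * b ^ d) * chi E (t * c ^ d))"
      by (rule sum.reindex_bij_betw[OF bij, where g = "\<lambda>t. chi E (t * a ^ d) * chi E (t * b ^ d) * chi E (t * c ^ d)"])
    also have "\<dots> = int CARD('a) * int (N_count E (a ^ d) (b ^ d) (c ^ d))"
      by (rule N_formula[symmetric])
    finally have "N_count B a b c = N_count E (a ^ d) (b ^ d) (c ^ d)" by simp
    moreover have "I_count B u1 u2 u3 = N_count B a b c" unfolding a_def b_def c_def by (rule I_eq_N[OF assms(5)])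
    ultimately show ?thesis by (simp add: a_def b_def c_def minus_eq_plus)
  qed
qed

end
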